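(* Let $W\in\mathcal A$ be a $\phi$-Lyapunov function, i.e. $W\ge 1$, $\phi:\mathbb R^+\to(0,\infty)$ is $\mathcal C^1$ and increasing (with $\phi'>0$), and there are a set $K\subset E$ and $b\ge 0$ with $LW\le -\phi(W)+b\,\mathbf 1_K$. Assume that $\mu$ satisfies a local Poincaré inequality on some set $U\supseteq K$ with constant $\kappa_U$. Then for all $g\in\mathcal A$, $$\mathrm{Var}_\mu(g)\le \max\Big(\frac{b\kappa_U}{\phi(1)},1\Big)\int\Big(1+\frac{1}{\phi'(W)}\Big)\Gamma(g)\,d\mu .$$
   Context: Standing framework: $E$ is a Polish space, $\mu$ a Borel probability measure on $E$, $L$ a $\mu$-symmetric (Markov diffusion) operator and $\mathcal A$ an algebra of bounded functions containing the constants and dense in $L^2(\mu)$ in the domain of $L$. The carré du champ is $\Gamma(f,g)=\frac12\big(L(fg)-fLg-gLf\big)$, $\Gamma(f)=\Gamma(f,f)\ge 0$; $\Gamma$ is assumed to be a derivation in each argument ($\Gamma(fg,h)=f\Gamma(g,h)+g\Gamma(f,h)$) and to satisfy the chain rule $\Gamma(\Psi(f),\Phi(g))=\Psi'(f)\Phi'(g)\Gamma(f,g)$; by symmetry $\int\Gamma(f,g)\,d\mu=-\int f\,Lg\,d\mu$. (Model case: $E=\mathbb R^n$, $d\mu=p\,dx$, $L=\Delta+\nabla\log p\cdot\nabla$, $\Gamma(f,g)=\nabla f\cdot\nabla g$, $\mathcal A$ = smooth compactly supported functions plus constants.) All integrations by parts used are assumed justified. A local Poincaré inequality on $U\subset E$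 with constant $\kappa_U$ means: for all $f\in\mathcal A$, $\int_U f^2\,d\mu\le \kappa_U\int_E\Gamma(f)\,d\mu+\frac{1}{\mu(U)}\big(\int_U f\,d\mu\big)^2$. *)

theory Defs
  imports "HOL-Probability.Probability"
begin

text \<open>This encodes the standing
      convention that all integrations by parts used are justified.\<close>

definition diffusion_framework ::
  "'a::polish_space measure \<Rightarrow> ('a \<Rightarrow> real) set \<Rightarrow> ('a \<Rightarrow> real) set
   \<Rightarrow> (('a \<Rightarrow> real) \<Rightarrow> ('a \<Rightarrow> real))
   \<Rightarrow> (('a \<Rightarrow> real) \<Rightarrow> ('a \<Rightarrow> real) \<Rightarrow> ('a \<Rightarrow> real)) \<Rightarrow> bool" where
  "diffusion_framework M A D L G \<longleftrightarrow>
     prob_space M \<and> sets M = sets borel \<and>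
     \<comment> \<open>A is an algebra of bounded measurable functions containing the constants\<close>
     (\<forall>c. (\<lambda>_. c) \<in> A) \<and>
     (\<forall>f\<in>A. \<forall>g\<in>A. (\<lambda>x. f x + g x) \<in> A \<and> (\<lambda>x. f x * g x) \<in> A) \<and>
     (\<forall>c. \<forall>f\<in>A. (\<lambda>x. c * f x) \<in> A) \<and>
     (\<forall>f\<in>A. f \<in> borel_measurable M \<and> (\<exists>B. \<forall>x\<in>space M. \<bar>f x\<bar> \<le> B)) \<and>
     \<comment> \<open>A is dense in L2(M)\<close>
     (\<forall>h\<in>borel_measurable M. integrable M (\<lambda>x. (h x)\<^sup>2) \<longrightarrow>
        (\<forall>e>0. \<exists>f\<in>A. (\<integral>x. (f x - h x)\<^sup>2 \<partial>M) < e)) \<and>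
     \<comment> \<open>A lies in the (L2-)domain of L\<close>
     (\<forall>f\<in>A. L f \<in> borel_measurable M \<and> integrable M (\<lambda>x. (L f x)\<^sup>2)) \<and>
     \<comment> \<open>Markov: L 1 = 0\<close>
     (\<forall>x\<in>space M. L (\<lambda>_. 1) x = 0) \<and>
     \<comment> \<open>mu-symmetry\<close>
     (\<forall>f\<in>A. \<forall>g\<in>A. (\<integral>x. f x * L g x \<partial>M) = (\<integral>x. g x * L f x \<partial>M)) \<and>
     \<comment> \<open>carre du champ on A\<close>
     (\<forall>f\<in>A. \<forall>g\<in>A. \<forall>x\<in>space M.
        G f g x = (L (\<lambda>y. f y * g y) x - f x * L g x - g x * L f x) / 2) \<and>
     \<comment> \<open>extended class D\<close>
     A \<subseteq> D \<and>
     (\<forall>f\<in>D. f \<in> borel_measurable M \<and> (\<exists>B. \<forall>x\<in>space M. \<bar>f x\<bar> \<le> B)) \<and>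
     (\<forall>c. \<forall>f\<in>D. \<forall>g\<in>D. (\<lambda>x. c * f x + g x) \<in> D \<and> (\<lambda>x. f x * g x) \<in> D) \<and>
     (\<forall>f\<in>D. \<forall>S \<Psi> \<Psi>'. open S \<and> closure (f ` space M) \<subseteq> S \<and>
        (\<forall>y\<in>S. (\<Psi> has_real_derivative \<Psi>' y) (at y)) \<and> continuous_on S \<Psi>'
        \<longrightarrow> (\<lambda>x. \<Psi> (f x)) \<in> D \<and>
            (\<forall>g\<in>D. \<forall>x\<in>space M. G (\<lambda>y. \<Psi> (f y)) g x = \<Psi>' (f x) * G f g x)) \<and>
     \<comment> \<open>G on D: symmetric, nonnegative, bilinear, derivation, measurable and integrable\<close>
     (\<forall>f\<in>D. \<forall>g\<in>D. \<forall>x\<in>space M. G f g x = G g f x) \<and>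
     (\<forall>f\<in>D. \<forall>x\<in>space M. G f f x \<ge> 0) \<and>
     (\<forall>c. \<forall>f\<in>D. \<forall>g\<in>D. \<forall>h\<in>D. \<forall>x\<in>space M.
        G (\<lambda>y. c * f y + g y) h x = c * G f h x + G g h x) \<and>
     (\<forall>f\<in>D. \<forall>g\<in>D. \<forall>h\<in>D. \<forall>x\<in>space M.
        G (\<lambda>y. f y * g y) h x = f x * G g h x + g x * G f h x) \<and>
     (\<forall>f\<in>D. \<forall>g\<in>D. integrable M (G f g)) \<and>
     \<comment> \<open>integration by parts\<close>
     (\<forall>f\<in>A. \<forall>h\<in>D. integrable M (\<lambda>x. h x * L f x) \<and>
        (\<integral>x. G f h x \<partial>M) = - (\<integral>x. h x * L f x \<partial>M))"

definition local_poincare ::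
  "'a measure \<Rightarrow> ('a \<Rightarrow> real) set
   \<Rightarrow> (('a \<Rightarrow> real) \<Rightarrow> ('a \<Rightarrow> real) \<Rightarrow> ('a \<Rightarrow> real)) \<Rightarrow> 'a set \<Rightarrow> real \<Rightarrow> bool" where
  "local_poincare M A G U \<kappa> \<longleftrightarrow>
     (\<forall>f\<in>A. (\<integral>x. indicator U x * (f x)\<^sup>2 \<partial>M)
        \<le> \<kappa> * (\<integral>x. G f f x \<partial>M)
          + (1 / measure M U) * (\<integral>x. indicator U x * f x \<partial>M)\<^sup>2)"

end

theory Submission
  imports Defs
begin

lemma bdd_integrable:
  fixes f :: "'a \<Rightarrow> real"
  assumes "finite_measure M" "f \<in> borel_measurable M" "\<forall>x\<in>space M. \<bar>f x\<bar> \<le> B"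
  shows "integrable M f"
  using assms by (intro finite_measure.integrable_const_bound[where B=B]) auto

lemma quad_bound:
  fixes GW GgW Gg a p :: real
  assumes "p > 0" "\<And>s. s\<^sup>2 * GW + 2 * s * GgW + Gg \<ge> 0"
  shows "- a\<^sup>2 * p * GW + 2 * a * GgW \<le> Gg / p"
proof -
  have "(-a*p)\<^sup>2 * GW + 2 * (-a*p) * GgW + Gg \<ge> 0" using assms(2) .
  hence "p * (- a\<^sup>2 * p * GW + 2 * a * GgW) \<le> Gg"
    by (simp add: power2_eq_square algebra_simps)
  thus ?thesis using assms(1) by (simp add: field_simps mult.commute)
qed

theorem mainTheorem1:
  fixes M :: "'a::polish_space measure"
    and A D :: "('a \<Rightarrow> real) set"
    and L :: "('a \<Rightarrow> real) \<Rightarrow> ('a \<Rightarrow> real)"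
    and G :: "('a \<Rightarrow> real) \<Rightarrow> ('a \<Rightarrow> real) \<Rightarrow> ('a \<Rightarrow> real)"
    and W g :: "'a \<Rightarrow> real"
    and \<phi> \<phi>' :: "real \<Rightarrow> real"
    and K U :: "'a set"
    and b \<kappa> :: real
  assumes frame: "diffusion_framework M A D L G"
    and W_A: "W \<in> A" and W_ge: "\<forall>x\<in>space M. W x \<ge> 1"
    and phi_pos: "\<forall>t>0. \<phi> t > 0"
    and phi_deriv: "\<forall>t>0. (\<phi> has_real_derivative \<phi>' t) (at t)"
    and phi'_cont: "continuous_on {0<..} \<phi>'"
    and phi'_pos: "\<forall>t>0. \<phi>' t > 0"
    and phi_mono: "mono_on {0<..} \<phi>"
    and b_nonneg: "b \<ge> 0"
    and lyap: "\<forall>x\<in>space M. L W x \<le> - \<phi> (W x) + b * indicator K x"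
    and U_meas: "U \<in> sets M" and KU: "K \<subseteq> U"
    and poinc: "local_poincare M A G U \<kappa>"
    and g_A: "g \<in> A"
  shows "(\<integral>x. (g x - (\<integral>y. g y \<partial>M))\<^sup>2 \<partial>M)
           \<le> max (b * \<kappa> / \<phi> 1) 1 * (\<integral>x. (1 + 1 / \<phi>' (W x)) * G g g x \<partial>M)"
proof -
  note F = frame[unfolded diffusion_framework_def]
  have ps: "prob_space M" using F by (elim conjE) assumption
  then have fm: "finite_measure M" unfolding prob_space_def by blast
  have AD: "A \<subseteq> D" using F by (elim conjE) assumption
  have Dbdd: "\<forall>f\<in>D. f \<in> borel_measurable M \<and> (\<exists>B. \<forall>x\<in>space M. \<bar>f x\<bar> \<le> B)" using F by (elim conjE) assumption
  have Dcl: "\<forall>c. \<forall>f\<in>D. \<forall>g\<in>D. (\<lambda>x. c * f x + g x) \<in> D \<and> (\<lambda>x. f x * g x) \<in> D" using F by (elim conjE) assumption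
  have chainr: "\<forall>f\<in>D. \<forall>S \<Psi> \<Psi>'. open S \<and> closure (f ` space M) \<subseteq> S \<and>
        (\<forall>y\<in>S. (\<Psi> has_real_derivative \<Psi>' y) (at y)) \<and> continuous_on S \<Psi>'
        \<longrightarrow> (\<lambda>x. \<Psi> (f x)) \<in> D \<and>
            (\<forall>g\<in>D. \<forall>x\<in>space M. G (\<lambda>y. \<Psi> (f y)) g x = \<Psi>' (f x) * G f g x)" using F by (elim conjE) assumption
  have symm: "\<forall>f\<in>D. \<forall>g\<in>D. \<forall>x\<in>space M. G f g x = G g f x" using F by (elim conjE) assumption
  have nonneg: "\<forall>f\<in>D. \<forall>x\<in>space M. G f f x \<ge> 0" using F by (elim conjE) assumption
  have lin: "\<forall>c. \<forall>f\<in>D. \<forall>g\<in>D. \<forall>h\<in>D. \<forall>x\<in>space M.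
        G (\<lambda>y. c * f y + g y) h x = c * G f h x + G g h x" using F by (elim conjE) assumption
  have der: "\<forall>f\<in>D. \<forall>g\<in>D. \<forall>h\<in>D. \<forall>x\<in>space M.
        G (\<lambda>y. f y * g y) h x = f x * G g h x + g x * G f h x" using F by (elim conjE) assumption
  have Gint: "\<forall>f\<in>D. \<forall>g\<in>D. integrable M (G f g)" using F by (elim conjE) assumption
  have ibp: "\<forall>f\<in>A. \<forall>h\<in>D. integrable M (\<lambda>x. h x * L f x) \<and>
        (\<integral>x. G f h x \<partial>M) = - (\<integral>x. h x * L f x \<partial>M)" using F by (elim conjE) assumption
  have WD: "W \<in> D" and gD: "g \<in> D" using AD W_A g_A by auto

  obtain BW where BW: "\<forall>x\<in>space M. \<bar>W x\<bar> \<le> BW" using Dbdd WD by blast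
  have Wmeas: "W \<in> borel_measurable M" using Dbdd WD by blast
  have phic: "continuous_on {0<..} \<phi>"
    using phi_deriv by (meson DERIV_isCont continuous_at_imp_continuous_on greaterThan_iff)
  define I where "I = (\<integral>x. indicator U x * g x \<partial>M)"
  define c where "c = I / measure M U"
  define gc where "gc = (\<lambda>x. (g x - c)\<^sup>2)"
  define q where "q = (\<lambda>x. 1 / \<phi> (W x))"
  define h where "h = (\<lambda>x. gc x * q x)"
  have ch1: "gc \<in> D \<and> (\<forall>f\<in>D. \<forall>x\<in>space M. G gc f x = 2 * (g x - c) * G g f x)"
  proof -
    have "(\<lambda>x. (\<lambda>t. (t - c)\<^sup>2) (g x)) \<in> D \<and>
       (\<forall>f\<in>D. \<forall>x\<in>space M. G (\<lambda>y. (\<lambda>t. (t - c)\<^sup>2) (g y)) f x = (\<lambda>t. 2 * (t - c)) (g x) * G g f x)"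
    proof (rule chainr[rule_format, OF gD], intro conjI)
      show "open (UNIV::real set)" by simp
      show "closure (g ` space M) \<subseteq> UNIV" by simp
      show "\<forall>y\<in>UNIV. ((\<lambda>t. (t - c)\<^sup>2) has_real_derivative 2 * (y - c)) (at y)"
        by (auto intro!: derivative_eq_intros)
      show "continuous_on UNIV (\<lambda>t. 2 * (t - c))" by (intro continuous_intros)
    qed
    thus ?thesis unfolding gc_def by simp
  qed
  have clW: "closure (W ` space M) \<subseteq> {0<..}"
  proof -
    have "closure (W ` space M) \<subseteq> {1..}"
      by (rule closure_minimal) (use W_ge in auto)
    thus ?thesis by auto
  qed
  have ch2: "q \<in> D \<and> (\<forall>f\<in>D. \<forall>x\<in>space M. G q f x = (- \<phi>' (W x) / (\<phi> (W x))\<^sup>2) * G W f x)"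
  proof -
    have "(\<lambda>x. (\<lambda>t. 1 / \<phi> t) (W x)) \<in> D \<and>
       (\<forall>f\<in>D. \<forall>x\<in>space M. G (\<lambda>y. (\<lambda>t. 1 / \<phi> t) (W y)) f x = (\<lambda>t. - \<phi>' t / (\<phi> t)\<^sup>2) (W x) * G W f x)"
    proof (rule chainr[rule_format, OF WD], intro conjI)
      show "open {0::real<..}" by simp
      show "closure (W ` space M) \<subseteq> {0<..}" by (rule clW)
      show "\<forall>y\<in>{0<..}. ((\<lambda>t. 1 / \<phi> t) has_real_derivative - \<phi>' y / (\<phi> y)\<^sup>2) (at y)"
      proof
        fix y :: real assume y: "y \<in> {0<..}"
        have "((\<lambda>t. inverse (\<phi> t)) has_real_derivative - (inverse (\<phi> y) * \<phi>' y * inverse (\<phi> y))) (at y)"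
          using y phi_deriv phi_pos by (intro DERIV_inverse') auto
        thus "((\<lambda>t. 1 / \<phi> t) has_real_derivative - \<phi>' y / (\<phi> y)\<^sup>2) (at y)"
          by (simp add: divide_inverse power2_eq_square mult.commute mult.left_commute)
      qed
      show "continuous_on {0<..} (\<lambda>t. - \<phi>' t / (\<phi> t)\<^sup>2)"
        using phic phi'_cont phi_pos by (intro continuous_intros) auto
    qed
    thus ?thesis unfolding q_def by simp
  qed
  have gcD: "gc \<in> D" and qD: "q \<in> D" using ch1 ch2 by auto
  have hD: "h \<in> D" unfolding h_def using Dcl gcD qD by blast

  have gmeas: "g \<in> borel_measurable M" using Dbdd gD by blast
  have gint: "integrable M g" using Dbdd gD fm bdd_integrable by blast
  have Dint: "integrable M f" if "f \<in> D" for f using Dbdd that fm bdd_integrable by blast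
  have gcint: "integrable M gc" using Dint gcD .
  have g2D: "(\<lambda>x. g x * g x) \<in> D" using Dcl gD by blast
  have g2int: "integrable M (\<lambda>x. (g x)\<^sup>2)" using Dint[OF g2D] by (simp add: power2_eq_square)
  have Ggg_int: "integrable M (G g g)" using Gint gD by blast
  have Ggg_nn: "\<forall>x\<in>space M. G g g x \<ge> 0" using nonneg gD by blast
  have key: "G h W x \<le> G g g x / \<phi>' (W x)" if x: "x \<in> space M" for x
  proof -
    have Wx: "W x \<ge> 1" using W_ge x by blast
    have p: "\<phi>' (W x) > 0" "\<phi> (W x) > 0" using phi'_pos phi_pos Wx by auto
    have quad: "s\<^sup>2 * G W W x + 2 * s * G g W x + G g g x \<ge> 0" for s
    proof -
      define u where "u = (\<lambda>y. s * W y + g y)"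
      have uD: "u \<in> D" unfolding u_def using Dcl WD gD by blast
      have "G u u x \<ge> 0" using nonneg uD x by blast
      also have "G u u x = s * G W u x + G g u x" unfolding u_def using lin WD gD uD x by (simp add: u_def)
      also have "G W u x = G u W x" using symm WD uD x by blast
      also have "G u W x = s * G W W x + G g W x" unfolding u_def using lin WD gD x by blast
      also have "G g u x = G u g x" using symm gD uD x by blast
      also have "G u g x = s * G W g x + G g g x" unfolding u_def using lin WD gD x by blast
      also have "G W g x = G g W x" using symm gD WD x by blast
      finally show ?thesis by (simp add: power2_eq_square algebra_simps)
    qed
    have "G h W x = gc x * G q W x + q x * G gc W x"
      unfolding h_def using der gcD qD WD x by blast
    also have "\<dots> = - ((g x - c) / \<phi> (W x))\<^sup>2 * \<phi>' (W x) * G W W x + 2 * ((g x - c) / \<phi> (W x)) * G g W x"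
      using ch1 ch2 WD x by (simp add: gc_def q_def power2_eq_square field_simps)
    also have "\<dots> \<le> G g g x / \<phi>' (W x)"
      by (rule quad_bound[OF p(1) quad])
    finally show ?thesis .
  qed

  obtain m where m: "m > 0" "\<forall>x\<in>space M. \<phi>' (W x) \<ge> m"
  proof -
    define T where "T = {1..max BW 1}"
    have "compact T" "T \<noteq> {}" unfolding T_def by auto
    moreover have "continuous_on T \<phi>'"
      using phi'_cont by (rule continuous_on_subset) (auto simp: T_def)
    ultimately obtain t0 where t0: "t0 \<in> T" "\<forall>y\<in>T. \<phi>' t0 \<le> \<phi>' y"
      using continuous_attains_inf by blast
    have "\<phi>' t0 > 0" using t0 phi'_pos by (auto simp: T_def)
    moreover have "\<forall>x\<in>space M. \<phi>' (W x) \<ge> \<phi>' t0"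
    proof
      fix x assume x: "x \<in> space M"
      have "W x \<in> T" using W_ge BW x by (force simp: T_def)
      thus "\<phi>' (W x) \<ge> \<phi>' t0" using t0 by blast
    qed
    ultimately show ?thesis using that by blast
  qed
  have phiWmeas: "(\<lambda>x. \<phi>' (W x)) \<in> borel_measurable M"
  proof -
    have "continuous_on UNIV (\<lambda>t. \<phi>' (max t 1))"
      by (rule continuous_on_compose2[OF phi'_cont]) (auto intro!: continuous_intros)
    hence "(\<lambda>t. \<phi>' (max t 1)) \<in> borel_measurable borel" by (rule borel_measurable_continuous_onI)
    hence "(\<lambda>x. \<phi>' (max (W x) 1)) \<in> borel_measurable M"
      using Wmeas by (rule measurable_compose[rotated])
    moreover have "\<forall>x\<in>space M. \<phi>' (max (W x) 1) = \<phi>' (W x)" using W_ge by (force simp: max_def)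
    ultimately show ?thesis by (simp cong: measurable_cong)
  qed
  have A1int: "integrable M (\<lambda>x. G g g x / \<phi>' (W x))"
  proof (rule Bochner_Integration.integrable_bound[where f="\<lambda>x. (1/m) * G g g x"])
    show "integrable M (\<lambda>x. (1/m) * G g g x)" using Ggg_int by simp
    show "(\<lambda>x. G g g x / \<phi>' (W x)) \<in> borel_measurable M"
      using Ggg_int phiWmeas by measurable
    show "AE x in M. norm (G g g x / \<phi>' (W x)) \<le> norm ((1/m) * G g g x)"
    proof (rule AE_I2)
      fix x assume x: "x \<in> space M"
      have "\<phi>' (W x) \<ge> m" using m x by blast
      moreover have "G g g x \<ge> 0" using Ggg_nn x by blast
      ultimately show "norm (G g g x / \<phi>' (W x)) \<le> norm ((1/m) * G g g x)"
        using m(1) by (simp add: divide_simps mult_left_mono)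
    qed
  qed

  have hLint: "integrable M (\<lambda>x. h x * L W x)" and ibpW: "(\<integral>x. G W h x \<partial>M) = - (\<integral>x. h x * L W x \<partial>M)"
    using ibp W_A hD by blast+
  have hUint: "integrable M (\<lambda>x. indicator U x * h x)"
    using integrable_mult_indicator[OF U_meas Dint[OF hD]] by simp
  have gcUint: "integrable M (\<lambda>x. indicator U x * gc x)"
    using integrable_mult_indicator[OF U_meas gcint] by simp
  have phi1: "\<phi> 1 > 0" using phi_pos by simp
  have pw1: "gc x \<le> - (h x * L W x) + b * (indicator U x * h x)" if x: "x \<in> space M" for x
  proof -
    have Wx: "W x \<ge> 1" using W_ge x by blast
    have ph: "\<phi> (W x) > 0" using phi_pos Wx by auto
    have hx: "h x \<ge> 0" unfolding h_def gc_def q_def using ph by simp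
    have gceq: "gc x = h x * \<phi> (W x)" unfolding h_def q_def using ph by simp
    have "\<phi> (W x) \<le> - L W x + b * indicator K x" using lyap x by force
    also have "\<dots> \<le> - L W x + b * indicator U x"
      using KU b_nonneg by (auto simp: indicator_def)
    finally have "h x * \<phi> (W x) \<le> h x * (- L W x + b * indicator U x)"
      using hx by (rule mult_left_mono)
    thus ?thesis using gceq by (simp add: algebra_simps)
  qed
  have pw2: "indicator U x * h x \<le> (1 / \<phi> 1) * (indicator U x * gc x)" if x: "x \<in> space M" for x
  proof -
    have Wx: "W x \<ge> 1" using W_ge x by blast
    have le: "\<phi> 1 \<le> \<phi> (W x)" using phi_mono Wx by (auto intro: mono_onD)
    have gcx: "gc x \<ge> 0" unfolding gc_def by simp
    have "gc x / \<phi> (W x) \<le> gc x / \<phi> 1"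
      using le phi1 gcx by (intro divide_left_mono) auto
    thus ?thesis unfolding h_def q_def by (auto simp: indicator_def)
  qed
  have step1: "(\<integral>x. gc x \<partial>M) \<le> - (\<integral>x. h x * L W x \<partial>M) + b * (\<integral>x. indicator U x * h x \<partial>M)"
  proof -
    have "(\<integral>x. gc x \<partial>M) \<le> (\<integral>x. - (h x * L W x) + b * (indicator U x * h x) \<partial>M)"
      using gcint hLint hUint pw1 by (intro integral_mono) auto
    also have "\<dots> = - (\<integral>x. h x * L W x \<partial>M) + b * (\<integral>x. indicator U x * h x \<partial>M)"
      using hLint hUint by simp
    finally show ?thesis .
  qed
  have step2: "- (\<integral>x. h x * L W x \<partial>M) \<le> (\<integral>x. G g g x / \<phi>' (W x) \<partial>M)"
  proof -
    have "- (\<integral>x. h x * L W x \<partial>M) = (\<integral>x. G W h x \<partial>M)" using ibpW by simp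
    also have "\<dots> = (\<integral>x. G h W x \<partial>M)"
      using symm WD hD by (intro Bochner_Integration.integral_cong) auto
    also have "\<dots> \<le> (\<integral>x. G g g x / \<phi>' (W x) \<partial>M)"
      using Gint hD WD A1int key by (intro integral_mono) auto
    finally show ?thesis .
  qed
  have step3: "(\<integral>x. indicator U x * h x \<partial>M) \<le> (1 / \<phi> 1) * (\<integral>x. indicator U x * gc x \<partial>M)"
  proof -
    have "(\<integral>x. indicator U x * h x \<partial>M) \<le> (\<integral>x. (1 / \<phi> 1) * (indicator U x * gc x) \<partial>M)"
      using hUint gcUint pw2 by (intro integral_mono) auto
    thus ?thesis by simp
  qed

  have gUint: "integrable M (\<lambda>x. indicator U x * g x)"
    using integrable_mult_indicator[OF U_meas gint] by simp
  have g2Uint: "integrable M (\<lambda>x. indicator U x * (g x)\<^sup>2)"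
    using integrable_mult_indicator[OF U_meas g2int] by simp
  have UU: "(\<integral>x. indicator U x \<partial>M) = measure M U"
    using U_meas sets.sets_into_space by (simp add: Int_absorb2)
  have step4: "(\<integral>x. indicator U x * gc x \<partial>M) \<le> \<kappa> * (\<integral>x. G g g x \<partial>M)"
  proof -
    have "(\<integral>x. indicator U x * gc x \<partial>M)
        = (\<integral>x. indicator U x * (g x)\<^sup>2 - (2 * c) * (indicator U x * g x) + c\<^sup>2 * indicator U x \<partial>M)"
      unfolding gc_def by (intro Bochner_Integration.integral_cong)
        (auto simp: indicator_def power2_eq_square algebra_simps)
    also have "\<dots> = (\<integral>x. indicator U x * (g x)\<^sup>2 \<partial>M) - 2 * c * I + c\<^sup>2 * measure M U"
    proof -
      have iU: "integrable M (\<lambda>x. indicator U x :: real)"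
        using integrable_mult_indicator[OF U_meas finite_measure.integrable_const[OF fm, of "1::real"]] by simp
      have i2: "integrable M (\<lambda>x. (2 * c) * (indicator U x * g x))" using gUint by simp
      have i3: "integrable M (\<lambda>x. c\<^sup>2 * indicator U x)" using iU by simp
      have "(\<integral>x. indicator U x * (g x)\<^sup>2 - (2 * c) * (indicator U x * g x) + c\<^sup>2 * indicator U x \<partial>M)
          = (\<integral>x. indicator U x * (g x)\<^sup>2 - (2 * c) * (indicator U x * g x) \<partial>M) + (\<integral>x. c\<^sup>2 * indicator U x \<partial>M)"
        using g2Uint i2 i3 by (intro Bochner_Integration.integral_add) auto
      also have "(\<integral>x. indicator U x * (g x)\<^sup>2 - (2 * c) * (indicator U x * g x) \<partial>M)
          = (\<integral>x. indicator U x * (g x)\<^sup>2 \<partial>M) - (\<integral>x. (2 * c) * (indicator U x * g x) \<partial>M)"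
        using g2Uint i2 by (intro Bochner_Integration.integral_diff) auto
      finally show ?thesis using UU unfolding I_def by simp
    qed
    also have "\<dots> = (\<integral>x. indicator U x * (g x)\<^sup>2 \<partial>M) + (1 / measure M U) * I\<^sup>2 - 2 * (1 / measure M U) * I\<^sup>2"
      unfolding c_def by (cases "measure M U = 0") (simp_all add: field_simps power2_eq_square)
    also have "\<dots> \<le> \<kappa> * (\<integral>x. G g g x \<partial>M)"
    proof -
      have "(\<integral>x. indicator U x * (g x)\<^sup>2 \<partial>M) \<le> \<kappa> * (\<integral>x. G g g x \<partial>M) + (1 / measure M U) * I\<^sup>2"
        using poinc g_A unfolding local_poincare_def I_def by blast
      thus ?thesis by linarith
    qed
    finally show ?thesis .
  qed
  have step5: "(\<integral>x. (g x - (\<integral>y. g y \<partial>M))\<^sup>2 \<partial>M) \<le> (\<integral>x. gc x \<partial>M)"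
  proof -
    define mm where "mm = (\<integral>y. g y \<partial>M)"
    have m1: "measure M (space M) = 1" using ps by (simp add: prob_space.prob_space)
    have gmint: "integrable M (\<lambda>x. (g x - mm)\<^sup>2)"
    proof -
      have "integrable M (\<lambda>x. (g x)\<^sup>2 - 2 * mm * g x + mm\<^sup>2)"
        using g2int gint finite_measure.integrable_const[OF fm]
        by (intro Bochner_Integration.integrable_add Bochner_Integration.integrable_diff
            Bochner_Integration.integrable_mult_right) auto
      thus ?thesis by (simp add: power2_eq_square algebra_simps)
    qed
    have "(\<integral>x. gc x \<partial>M) = (\<integral>x. (g x - mm)\<^sup>2 + (2 * (mm - c)) * g x + ((mm - c)\<^sup>2 - 2 * (mm - c) * mm) \<partial>M)"
      unfolding gc_def by (intro Bochner_Integration.integral_cong) (auto simp: power2_eq_square algebra_simps)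
    also have "\<dots> = (\<integral>x. (g x - mm)\<^sup>2 \<partial>M) + (2 * (mm - c)) * mm + ((mm - c)\<^sup>2 - 2 * (mm - c) * mm)"
    proof -
      define k1 where "k1 = 2 * (mm - c)"
      define k2 where "k2 = (mm - c)\<^sup>2 - 2 * (mm - c) * mm"
      have ia: "integrable M (\<lambda>x. k1 * g x)" using gint by simp
      have ib: "integrable M (\<lambda>x. k2)" using finite_measure.integrable_const[OF fm] .
      have "(\<integral>x. (g x - mm)\<^sup>2 + k1 * g x + k2 \<partial>M) = (\<integral>x. (g x - mm)\<^sup>2 + k1 * g x \<partial>M) + (\<integral>x. k2 \<partial>M)"
        using gmint ia ib by (intro Bochner_Integration.integral_add) auto
      also have "(\<integral>x. (g x - mm)\<^sup>2 + k1 * g x \<partial>M) = (\<integral>x. (g x - mm)\<^sup>2 \<partial>M) + (\<integral>x. k1 * g x \<partial>M)"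
        using gmint ia by (intro Bochner_Integration.integral_add) auto
      finally have "(\<integral>x. (g x - mm)\<^sup>2 + k1 * g x + k2 \<partial>M) = (\<integral>x. (g x - mm)\<^sup>2 \<partial>M) + k1 * mm + k2"
        using m1 unfolding mm_def by simp
      thus ?thesis unfolding k1_def k2_def .
    qed
    finally show ?thesis unfolding mm_def by simp
  qed
  define A0 where "A0 = (\<integral>x. G g g x \<partial>M)"
  define A1 where "A1 = (\<integral>x. G g g x / \<phi>' (W x) \<partial>M)"
  have A0nn: "A0 \<ge> 0" unfolding A0_def using Ggg_nn by (intro Bochner_Integration.integral_nonneg) auto
  have A1nn: "A1 \<ge> 0" unfolding A1_def using Ggg_nn m by (intro Bochner_Integration.integral_nonneg) (metis divide_nonneg_pos order_less_le_trans)
  have rhs: "(\<integral>x. (1 + 1 / \<phi>' (W x)) * G g g x \<partial>M) = A0 + A1"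
  proof -
    have "(\<integral>x. (1 + 1 / \<phi>' (W x)) * G g g x \<partial>M) = (\<integral>x. G g g x + G g g x / \<phi>' (W x) \<partial>M)"
      by (intro Bochner_Integration.integral_cong) (auto simp: field_simps)
    also have "\<dots> = A0 + A1" unfolding A0_def A1_def using Ggg_int A1int by simp
    finally show ?thesis .
  qed
  define mx where "mx = max (b * \<kappa> / \<phi> 1) 1"
  have "(\<integral>x. (g x - (\<integral>y. g y \<partial>M))\<^sup>2 \<partial>M) \<le> A1 + b * ((1 / \<phi> 1) * (\<kappa> * A0))"
  proof -
    have bp: "b * (1 / \<phi> 1) \<ge> 0" using b_nonneg phi1 by simp
    have "b * (\<integral>x. indicator U x * h x \<partial>M) \<le> b * ((1 / \<phi> 1) * (\<integral>x. indicator U x * gc x \<partial>M))"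
      using step3 b_nonneg by (rule mult_left_mono)
    also have "\<dots> = (b * (1 / \<phi> 1)) * (\<integral>x. indicator U x * gc x \<partial>M)" by simp
    also have "\<dots> \<le> (b * (1 / \<phi> 1)) * (\<kappa> * A0)" unfolding A0_def using step4 bp by (rule mult_left_mono)
    finally have "b * (\<integral>x. indicator U x * h x \<partial>M) \<le> b * ((1 / \<phi> 1) * (\<kappa> * A0))" by simp
    thus ?thesis using step1 step2 step5 unfolding A1_def by linarith
  qed
  also have "\<dots> = A1 + (b * \<kappa> / \<phi> 1) * A0" by simp
  also have "\<dots> \<le> mx * A1 + mx * A0"
  proof -
    have "A1 \<le> mx * A1" using A1nn mult_right_mono[of 1 mx A1] unfolding mx_def by simp
    moreover have "(b * \<kappa> / \<phi> 1) * A0 \<le> mx * A0" using A0nn unfolding mx_def by (intro mult_right_mono) auto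
    ultimately show ?thesis by linarith
  qed
  also have "\<dots> = mx * (\<integral>x. (1 + 1 / \<phi>' (W x)) * G g g x \<partial>M)" using rhs by (simp add: algebra_simps)
  finally show ?thesis unfolding mx_def .
qed

end
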